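(* Fix $b$ real unimodal polynomials $p_1,\dots,p_b$ preserving $[-1,1]$. For every $\beta\in(0,1)$ and $b\in\mathbb N$ there exist a Jordan domain $U_\beta\subset\mathbb C$ containing $I=[-1,1]$ and a constant $M_\beta>0$ such that for every map $g$ in the Epstein class $\hat{\mathcal E}_\beta$, the holomorphic extension of $g$ is well-defined on $U_\beta$ and satisfies $|g(z)|\le M_\beta$ for all $z\in U_\beta$.
   Context: A diffeomorphism $\phi:I\to I$ is in the Epstein class $\mathcal E_\beta$ ($\beta>0$) if $\phi^{-1}$ extends to a holomorphic univalent map from $\mathbb C\setminus((-\infty,-1-\beta]\cup[1+\beta,\infty))$ into $\mathbb C$. With the polynomials $P=\{p_1,\dots,p_b\}$ fixed, $\hat{\mathcal E}_\beta$ denotes the set of maps $f:I\to I$ of the form $f=\phi_j\circ p_j\circ\phi_{j-1}\circ p_{j-1}\circ\dots\circ\phi_1\circ p_1$ with $j\le b$ and each $\phi_i\in\mathcal E_\beta$. *)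

theory Defs
  imports "HOL-Complex_Analysis.Complex_Analysis" "HOL-Computational_Algebra.Polynomial"
begin

abbreviation I_int :: "real set" where "I_int \<equiv> {-1..1}"

definition diffeo_I :: "(real \<Rightarrow> real) \<Rightarrow> bool" where
  "diffeo_I \<phi> \<longleftrightarrow> bij_betw \<phi> I_int I_int \<and>
     (\<exists>\<phi>'. continuous_on I_int \<phi>' \<and>
        (\<forall>x\<in>I_int. (\<phi> has_real_derivative \<phi>' x) (at x within I_int) \<and> \<phi>' x \<noteq> 0))"

definition slit_plane :: "real \<Rightarrow> complex set" where
  "slit_plane \<beta> = UNIV - {z. Im z = 0 \<and> (Re z \<le> -1 - \<beta> \<or> Re z \<ge> 1 + \<beta>)}"

definition epstein :: "real \<Rightarrow> (real \<Rightarrow> real) \<Rightarrow> bool" where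
  "epstein \<beta> \<phi> \<longleftrightarrow> diffeo_I \<phi> \<and>
     (\<exists>H. H holomorphic_on slit_plane \<beta> \<and> inj_on H (slit_plane \<beta>) \<and>
        (\<forall>y\<in>I_int. H (complex_of_real y) = complex_of_real (inv_into I_int \<phi> y)))"

definition unimodal_poly_I :: "real poly \<Rightarrow> bool" where
  "unimodal_poly_I p \<longleftrightarrow> poly p ` I_int \<subseteq> I_int \<and>
     (\<exists>c\<in>{-1<..<1}.
        (strict_mono_on {-1..c} (poly p) \<and> strict_mono_on {c..1} (\<lambda>x. - poly p x)) \<or>
        (strict_mono_on {-1..c} (\<lambda>x. - poly p x) \<and> strict_mono_on {c..1} (poly p)))"

fun chain_map :: "(nat \<Rightarrow> real \<Rightarrow> real) \<Rightarrow> (nat \<Rightarrow> real poly) \<Rightarrow> nat \<Rightarrow> real \<Rightarrow> real" where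
  "chain_map \<phi> p 0 = id"
| "chain_map \<phi> p (Suc i) = \<phi> (Suc i) \<circ> poly (p (Suc i)) \<circ> chain_map \<phi> p i"

definition epstein_hat :: "real \<Rightarrow> nat \<Rightarrow> (nat \<Rightarrow> real poly) \<Rightarrow> (real \<Rightarrow> real) set" where
  "epstein_hat \<beta> b p = {g. \<exists>j \<phi>. j \<le> b \<and> (\<forall>i\<in>{1..j}. epstein \<beta> (\<phi> i)) \<and>
                              (\<forall>x\<in>I_int. g x = chain_map \<phi> p j x)}"

definition jordan_domain :: "complex set \<Rightarrow> bool" where
  "jordan_domain U \<longleftrightarrow> (\<exists>c. simple_path c \<and> pathfinish c = pathstart c \<and>
                              U = inside (path_image c))"

end

theory Submission
  imports Defs
begin


definition Nb :: "real \<Rightarrow> complex set" where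
  "Nb d = (\<Union>x\<in>I_int. ball (complex_of_real x) d)"

definition Fp :: "real \<Rightarrow> (complex \<Rightarrow> complex) set" where
  "Fp \<beta> = {H. H holomorphic_on ball 0 (1+\<beta>) \<and> inj_on H (ball 0 (1+\<beta>)) \<and> H (-1) = -1 \<and> H 1 = 1
      \<and> (\<forall>x\<in>I_int. H (complex_of_real x) \<in> complex_of_real ` I_int)}"

lemma LB:
  assumes "0 < \<beta>" "\<beta> < 1" "compact K" "K \<subseteq> ball 0 (1+\<beta>)"
  shows "\<exists>B. \<forall>H\<in>Fp \<beta>. \<forall>z\<in>K. cmod (H z) \<le> B"
proof -
  define R where "R = 1+\<beta>"
  define \<rho> where "\<rho> = \<beta>/2"
  have \<rho>: "0 < \<rho>" "\<rho> < 1" "1 + \<rho> < R" using assms by (auto simp: \<rho>_def R_def)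
  define S' where "S' = ball (0::complex) R - {-1,1}"
  have oS': "open S'" unfolding S'_def by (simp add: open_Diff)
  have cS': "connected S'" unfolding S'_def
    by (rule connected_open_delete_finite) auto
  have 0: "0 \<in> S'" using \<rho> by (auto simp: S'_def R_def)
  define X where "X = (\<lambda>H z. (H z + 1)/2) ` Fp \<beta>"
  define K' where "K' = (K - (ball (-1) \<rho> \<union> ball 1 \<rho>)) \<union> sphere (-1) \<rho> \<union> sphere 1 \<rho>"
  have cK': "compact K'" unfolding K'_def
    using assms(3) by (intro compact_Un compact_diff) auto
  have sph: "norm z < R" if "z \<in> cball c \<rho>" "c = 1 \<or> c = -1" for z c :: complex
  proof -
    have "norm z \<le> norm c + dist c z" by (metis dist_norm norm_triangle_sub add.commute norm_minus_commute) 
    moreover have "norm c = 1" "dist c z \<le> \<rho>" using that by auto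
    ultimately show ?thesis using \<rho> by linarith
  qed
  have K'S': "K' \<subseteq> S'"
  proof
    fix z assume z: "z \<in> K'"
    show "z \<in> S'"
    proof (cases "z \<in> K - (ball (-1) \<rho> \<union> ball 1 \<rho>)")
      case True
      then show ?thesis using assms(4) \<rho> by (auto simp: S'_def R_def)
    next
      case False
      then have zs: "z \<in> sphere (-1) \<rho> \<or> z \<in> sphere 1 \<rho>" using z by (auto simp: K'_def)
      then have "norm z < R" using sph[of z 1] sph[of z "-1"] by auto
      moreover have "z \<noteq> 1" "z \<noteq> -1" using zs \<rho> by (auto simp: dist_norm)
      ultimately show ?thesis by (auto simp: S'_def)
    qed
  qed
  have holX: "h holomorphic_on S'" if "h \<in> X" for h
    using that unfolding X_def Fp_def S'_def R_def
    by (auto intro!: holomorphic_intros elim: holomorphic_on_subset)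
  have X01: "h z \<noteq> 0 \<and> h z \<noteq> 1" if hX: "h \<in> X" and zS: "z \<in> S'" for h z
  proof -
    obtain H where H: "H \<in> Fp \<beta>" "h = (\<lambda>z. (H z + 1)/2)" using hX X_def by auto
    have inj: "inj_on H (ball 0 R)" and H1: "H (-1) = -1" "H 1 = 1"
      using H(1) by (auto simp: Fp_def R_def)
    have m: "-1 \<in> ball (0::complex) R" "1 \<in> ball (0::complex) R" "z \<in> ball 0 R" "z \<noteq> 1" "z \<noteq> -1"
      using zS \<rho> by (auto simp: S'_def)
    have "H z \<noteq> -1" using inj_onD[OF inj, of z "-1"] m H1 by auto
    moreover have "H z \<noteq> 1" using inj_onD[OF inj, of z "1"] m H1 by auto
    ultimately show ?thesis using H(2) by (auto simp: field_simps add_eq_0_iff)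
  qed
  have bw: "norm (h 0) \<le> 1" if hX: "h \<in> X" for h
  proof -
    obtain H where H: "H \<in> Fp \<beta>" "h = (\<lambda>z. (H z + 1)/2)" using hX X_def by auto
    then obtain y where y: "y \<in> I_int" "H 0 = complex_of_real y" unfolding Fp_def
      by (metis (no_types, lifting) atLeastAtMost_iff image_iff mem_Collect_eq neg_le_0_iff_le of_real_0 zero_le_one)
    have "norm (H 0 + 1) \<le> 2" using y by (simp add: abs_if)
    then show ?thesis using H by (simp add: norm_divide)
  qed
  obtain B where B: "\<And>h z. \<lbrakk>h \<in> X; z \<in> K'\<rbrakk> \<Longrightarrow> norm(h z) \<le> B"
  proof (rule GPicard3[of S' 0 X X K'])
  qed (use oS' cS' 0 holX X01 bw cK' K'S' in auto)
  have BK': "cmod (H z) \<le> 2*B+1" if "H \<in> Fp \<beta>" "z \<in> K'" for H z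
  proof -
    have "norm ((H z + 1)/2) \<le> B" using B[of "\<lambda>z. (H z + 1)/2" z] that X_def by auto
    then have "norm (H z + 1) \<le> 2*B" by (simp add: norm_divide)
    then show ?thesis using norm_triangle_ineq4[of "H z + 1" 1] by simp
  qed
  show ?thesis
  proof (intro exI ballI)
    fix H z assume H: "H \<in> Fp \<beta>" and z: "z \<in> K"
    show "cmod (H z) \<le> 2*B+1"
    proof (cases "z \<in> ball (-1) \<rho> \<union> ball 1 \<rho>")
      case False
      then show ?thesis using BK'[OF H] z by (auto simp: K'_def)
    next
      case True
      then obtain c where c: "c = 1 \<or> c = -1" "z \<in> ball c \<rho>" by auto
      have holH: "H holomorphic_on ball 0 R" using H by (auto simp: Fp_def R_def)
      have sub: "cball c \<rho> \<subseteq> ball 0 R" using sph c(1) by auto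
      show ?thesis
      proof (rule maximum_modulus_frontier[where S="cball c \<rho>" and f=H and \<xi>=z])
        show "H holomorphic_on interior (cball c \<rho>)"
          using holomorphic_on_subset[OF holH] sub ball_subset_cball by (metis interior_cball subset_trans)
        show "continuous_on (closure (cball c \<rho>)) H"
          using holH sub holomorphic_on_imp_continuous_on continuous_on_subset by (metis closed_cball closure_closed)
        show "bounded (cball c \<rho>)" by simp
        show "cmod (H w) \<le> 2*B+1" if "w \<in> frontier (cball c \<rho>)" for w
          using that c(1) \<rho> BK'[OF H, of w] by (auto simp: K'_def frontier_cball)
        show "z \<in> cball c \<rho>" using c by auto
      qed
    qed
  qed
qed



lemma Nb_ball: "x \<in> I_int \<Longrightarrow> ball (complex_of_real x) d \<subseteq> Nb d"
  unfolding Nb_def by auto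

lemma KEY:
  assumes b: "0 < \<beta>" "\<beta> < 1" and d: "0 < \<delta>" "\<delta> \<le> \<beta>/2"
  shows "\<exists>\<epsilon>>0. \<forall>H\<in>Fp \<beta>. \<forall>w. (\<exists>x\<in>I_int. cmod (w - complex_of_real x) < \<epsilon>) \<longrightarrow> (\<exists>z\<in>Nb \<delta>. H z = w)"
proof (rule ccontr)
  define S where "S = ball (0::complex) (1+\<beta>)"
  assume neg: "\<not> ?thesis"
  then have "\<forall>n::nat. \<exists>H w x. H \<in> Fp \<beta> \<and> x \<in> I_int \<and> cmod (w - complex_of_real x) < 1/Suc n \<and> (\<forall>z\<in>Nb \<delta>. H z \<noteq> w)"
  proof (intro allI)
    fix n :: nat
    have "\<not> (\<forall>H\<in>Fp \<beta>. \<forall>w. (\<exists>x\<in>I_int. cmod (w - complex_of_real x) < 1/Suc n) \<longrightarrow> (\<exists>z\<in>Nb \<delta>. H z = w))"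
    proof
      assume A: "\<forall>H\<in>Fp \<beta>. \<forall>w. (\<exists>x\<in>I_int. cmod (w - complex_of_real x) < 1/Suc n) \<longrightarrow> (\<exists>z\<in>Nb \<delta>. H z = w)"
      have "\<exists>\<epsilon>>0. \<forall>H\<in>Fp \<beta>. \<forall>w. (\<exists>x\<in>I_int. cmod (w - complex_of_real x) < \<epsilon>) \<longrightarrow> (\<exists>z\<in>Nb \<delta>. H z = w)"
        by (rule exI[of _ "1/real (Suc n)"], rule conjI, simp, rule A)
      with neg show False by (rule notE)
    qed
    then show "\<exists>H w x. H \<in> Fp \<beta> \<and> x \<in> I_int \<and> cmod (w - complex_of_real x) < 1/Suc n \<and> (\<forall>z\<in>Nb \<delta>. H z \<noteq> w)"
      by blast
  qed
  then obtain h w x where hwx: "\<And>n. h n \<in> Fp \<beta>" "\<And>n. x n \<in> I_int"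
     "\<And>n. cmod (w n - complex_of_real (x n)) < 1/Suc n" "\<And>n z. z \<in> Nb \<delta> \<Longrightarrow> h n z \<noteq> w n"
  proof -
    from \<open>\<forall>n::nat. _\<close> obtain h where "\<forall>n. \<exists>w x. h n \<in> Fp \<beta> \<and> x \<in> I_int \<and> cmod (w - complex_of_real x) < 1/Suc n \<and> (\<forall>z\<in>Nb \<delta>. h n z \<noteq> w)"
      by (rule choice[THEN exE]) 
    then obtain w where "\<forall>n. \<exists>x. h n \<in> Fp \<beta> \<and> x \<in> I_int \<and> cmod (w n - complex_of_real x) < 1/Suc n \<and> (\<forall>z\<in>Nb \<delta>. h n z \<noteq> w n)"
      by (rule choice[THEN exE])
    then obtain x where "\<forall>n. h n \<in> Fp \<beta> \<and> x n \<in> I_int \<and> cmod (w n - complex_of_real (x n)) < 1/Suc n \<and> (\<forall>z\<in>Nb \<delta>. h n z \<noteq> w n)"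
      by (rule choice[THEN exE])
    then show ?thesis using that by blast
  qed
  obtain x0 r1 where x0: "x0 \<in> I_int" "strict_mono r1" "(x \<circ> r1) \<longlonglongrightarrow> x0"
    using compact_imp_seq_compact[OF compact_Icc[of "-1::real" 1], unfolded seq_compact_def] hwx(2)
    by metis
  have oS: "open S" and cS: "connected S" by (auto simp: S_def)
  have holF: "f holomorphic_on S" if "f \<in> Fp \<beta>" for f using that by (simp add: Fp_def S_def)
  obtain g r2 where g: "g holomorphic_on S" "strict_mono r2"
    "\<And>z. z \<in> S \<Longrightarrow> ((\<lambda>n. (h \<circ> r1) (r2 n) z) \<longlongrightarrow> g z) sequentially"
    "\<And>K. \<lbrakk>compact K; K \<subseteq> S\<rbrakk> \<Longrightarrow> uniform_limit K ((h \<circ> r1) \<circ> r2) g sequentially"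
  proof (rule Montel[of S "Fp \<beta>" "h \<circ> r1"])
    show "open S" by (rule oS)
    show "\<And>f. f \<in> Fp \<beta> \<Longrightarrow> f holomorphic_on S" by (rule holF)
    show "\<exists>B. \<forall>f\<in>Fp \<beta>. \<forall>z\<in>K. cmod (f z) \<le> B" if "compact K" "K \<subseteq> S" for K
      using LB[OF b that(1)] that(2) by (simp add: S_def)
    show "range (h \<circ> r1) \<subseteq> Fp \<beta>" using hwx(1) by auto
  qed auto
  define rr where "rr = r1 \<circ> r2"
  have ul: "uniform_limit K (\<lambda>n. h (rr n)) g sequentially" if "compact K" "K \<subseteq> S" for K
    using g(4)[OF that] by (simp add: rr_def comp_def)
  have pl: "((\<lambda>n. h (rr n) z) \<longlongrightarrow> g z) sequentially" if "z \<in> S" for z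
    using g(3)[OF that] by (simp add: rr_def comp_def)
  have m1: "-1 \<in> S" "1 \<in> S" using b by (auto simp: S_def)
  have "((\<lambda>n. h (rr n) (-1)) \<longlongrightarrow> -1) sequentially" "((\<lambda>n. h (rr n) 1) \<longlongrightarrow> 1) sequentially"
    using hwx(1) by (auto simp: Fp_def)
  then have g1: "g (-1) = -1" "g 1 = 1" using pl m1 LIMSEQ_unique by blast+
  have nc: "\<not> g constant_on S"
    using g1 m1 unfolding constant_on_def by (metis one_neq_neg_one)
  have injg: "inj_on g S"
  proof (rule Hurwitz_injective[OF oS cS _ g(1) ul nc])
    show "\<And>n. h (rr n) holomorphic_on S" using holF hwx(1) by auto
    show "\<And>n. inj_on (h (rr n)) S" using hwx(1) by (auto simp: Fp_def S_def)
  qed auto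
  have IS: "complex_of_real t \<in> S" if "t \<in> I_int" for t
    using that b by (auto simp: S_def)
  have greal: "g (complex_of_real t) \<in> complex_of_real ` I_int" if t: "t \<in> I_int" for t
  proof (rule Lim_in_closed_set[OF _ _ _ pl[OF IS[OF t]]])
    show "closed (complex_of_real ` I_int)"
      by (intro compact_imp_closed compact_continuous_image) (auto intro: continuous_intros)
    show "\<forall>\<^sub>F n in sequentially. h (rr n) (complex_of_real t) \<in> complex_of_real ` I_int"
      using hwx(1) t by (auto simp: Fp_def)
  qed auto
  define gr where "gr t = Re (g (complex_of_real t))" for t
  have cgr: "continuous_on I_int gr"
  proof -
    have "continuous_on S g" using g(1) holomorphic_on_imp_continuous_on by blast
    then have "continuous_on (complex_of_real ` I_int) g"
      using IS by (auto intro: continuous_on_subset)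
    moreover have "continuous_on I_int complex_of_real" by (intro continuous_intros)
    ultimately have "continuous_on I_int (g \<circ> complex_of_real)"
      using continuous_on_compose by blast
    then have "continuous_on I_int (\<lambda>t. Re ((g \<circ> complex_of_real) t))"
      by (rule continuous_on_Re)
    then show ?thesis unfolding gr_def by (simp add: comp_def)
  qed
  have "gr (-1) = -1" "gr 1 = 1" using g1 by (auto simp: gr_def)
  then obtain t0 where t0: "-1 \<le> t0" "t0 \<le> 1" "gr t0 = x0"
    using IVT'[of gr "-1" x0 1] cgr x0(1) by auto
  have gt0: "g (complex_of_real t0) = complex_of_real x0"
    using greal[of t0] t0 by (auto simp: gr_def)
  define D where "D = ball (complex_of_real t0) \<delta>"
  have DN: "D \<subseteq> Nb \<delta>" using Nb_ball[of t0 \<delta>] t0 by (simp add: D_def)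
  have DS: "D \<subseteq> S"
  proof
    fix z assume "z \<in> D"
    then have "dist (complex_of_real t0) z < \<delta>" by (simp add: D_def)
    moreover have "norm z \<le> norm (complex_of_real t0) + dist (complex_of_real t0) z"
      by (metis dist_norm norm_minus_commute norm_triangle_sub add.commute)
    moreover have "norm (complex_of_real t0) \<le> 1" using t0 by auto
    ultimately show "z \<in> S" using d b by (simp add: S_def)
  qed
  have wlim: "(\<lambda>n. w (rr n)) \<longlonglongrightarrow> complex_of_real x0"
  proof -
    have A: "(\<lambda>n. complex_of_real (x (rr n))) \<longlonglongrightarrow> complex_of_real x0"
      using LIMSEQ_subseq_LIMSEQ[OF x0(3) g(2)] by (auto simp: rr_def comp_def intro: tendsto_of_real)
    moreover have B: "(\<lambda>n. w (rr n) - complex_of_real (x (rr n))) \<longlonglongrightarrow> 0"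
    proof -
      have "(\<lambda>n. 1 / real (Suc n)) \<longlonglongrightarrow> 0" by (rule LIMSEQ_Suc[OF lim_const_over_n]) 
      then have "(\<lambda>n. 1 / real (Suc (rr n))) \<longlonglongrightarrow> 0"
        using LIMSEQ_subseq_LIMSEQ[of _ 0 rr] strict_mono_o[OF x0(2) g(2)] by (auto simp: rr_def comp_def)
      moreover have bnd: "\<forall>n. norm (w (rr n) - complex_of_real (x (rr n))) \<le> 1 / real (Suc (rr n))"
        using hwx(3) less_imp_le by blast
      ultimately show ?thesis
        by (intro Lim_null_comparison[OF always_eventually[OF bnd]])
    qed
    have "(\<lambda>n. complex_of_real (x (rr n)) + (w (rr n) - complex_of_real (x (rr n)))) \<longlonglongrightarrow> complex_of_real x0 + 0"
      by (rule tendsto_add[OF A B])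
    then show ?thesis by simp
  qed
  have "(\<lambda>z. g z - complex_of_real x0) (complex_of_real t0) \<noteq> 0"
  proof (rule Hurwitz_no_zeros[where S=D and \<F>="\<lambda>n z. h (rr n) z - w (rr n)" and g="\<lambda>z. g z - complex_of_real x0"])
    show "open D" "connected D" by (auto simp: D_def)
    show "\<And>n. (\<lambda>z. h (rr n) z - w (rr n)) holomorphic_on D"
      using holomorphic_on_subset[OF holF[OF hwx(1)] DS] by (auto intro!: holomorphic_intros)
    show "(\<lambda>z. g z - complex_of_real x0) holomorphic_on D"
      using holomorphic_on_subset[OF g(1) DS] by (auto intro!: holomorphic_intros)
    show "uniform_limit K (\<lambda>n z. h (rr n) z - w (rr n)) (\<lambda>z. g z - complex_of_real x0) sequentially"
      if "compact K" "K \<subseteq> D" for K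
    proof (rule uniform_limit_minus)
      show "uniform_limit K (\<lambda>n. h (rr n)) g sequentially" using ul that DS by auto
      show "uniform_limit K (\<lambda>n z. w (rr n)) (\<lambda>z. complex_of_real x0) sequentially"
        using wlim by (auto simp: uniform_limit_iff tendsto_iff)
    qed
    show "\<not> (\<lambda>z. g z - complex_of_real x0) constant_on D"
    proof
      assume "(\<lambda>z. g z - complex_of_real x0) constant_on D"
      then obtain c where c: "\<And>z. z \<in> D \<Longrightarrow> g z - complex_of_real x0 = c" by (auto simp: constant_on_def)
      define z2 where "z2 = complex_of_real t0 + complex_of_real (\<delta>/2)"
      have z2: "z2 \<in> D" "complex_of_real t0 \<in> D" using d by (auto simp: D_def z2_def dist_norm)
      have "g z2 = g (complex_of_real t0)" using c[OF z2(1)] c[OF z2(2)] by (metis diff_left_imp_eq diff_eq_eq)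
      then have "z2 = complex_of_real t0" using inj_onD[OF injg] z2 DS by blast
      then show False using d by (simp add: z2_def)
    qed
    show "\<And>n z. z \<in> D \<Longrightarrow> h (rr n) z - w (rr n) \<noteq> 0" using hwx(4) DN by auto
    show "complex_of_real t0 \<in> D" using d by (simp add: D_def)
  qed
  then show False using gt0 by simp
qed



lemma endpoints:
  fixes f :: "real \<Rightarrow> real"
  assumes c: "continuous_on I_int f" and bij: "bij_betw f I_int I_int"
  shows "(f (-1) = -1 \<and> f 1 = 1) \<or> (f (-1) = 1 \<and> f 1 = -1)"
proof -
  have inj: "inj_on f I_int" and surj: "f ` I_int = I_int" using bij by (auto simp: bij_betw_def)
  have fe: "f (-1) \<in> I_int" "f 1 \<in> I_int" using surj by auto
  have int: "f t \<noteq> -1 \<and> f t \<noteq> 1" if "-1 < t" "t < 1" for t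
    using continuous_inj_imp_mono[of "-1" t 1 f, OF that c inj] fe by auto
  have "-1 \<in> f ` I_int" "1 \<in> f ` I_int" unfolding surj by auto
  then obtain a b where a: "a \<in> I_int" "f a = -1" and b: "b \<in> I_int" "f b = 1" by (metis imageE)
  have "a = -1 \<or> a = 1" using a int[of a] by force
  moreover have "b = -1 \<or> b = 1" using b int[of b] by force
  ultimately show ?thesis using a b by auto
qed

lemma Nb_iff: "w \<in> Nb e \<longleftrightarrow> (\<exists>x\<in>I_int. cmod (w - complex_of_real x) < e)"
  unfolding Nb_def by (auto simp: dist_norm norm_minus_commute)

lemma Nb_neg: "w \<in> Nb e \<Longrightarrow> - w \<in> Nb e"
proof -
  assume "w \<in> Nb e"
  then obtain x where x: "x \<in> I_int" "cmod (w - complex_of_real x) < e" by (auto simp: Nb_iff)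
  have "cmod (- w - complex_of_real (-x)) = cmod (w - complex_of_real x)"
    by (metis minus_diff_eq norm_minus_cancel of_real_minus diff_minus_eq_add uminus_add_conv_diff)
  then show ?thesis using x by (auto simp: Nb_iff intro!: bexI[of _ "-x"])
qed

lemma Nb_sub_ball: "0 < e \<Longrightarrow> Nb e \<subseteq> ball 0 (1+e)"
proof
  fix z assume "0 < e" "z \<in> Nb e"
  then obtain x where x: "x \<in> I_int" "cmod (z - complex_of_real x) < e" by (auto simp: Nb_iff)
  have "cmod z \<le> cmod (complex_of_real x) + cmod (z - complex_of_real x)"
    by (metis add.commute diff_add_cancel norm_triangle_ineq)
  moreover have "cmod (complex_of_real x) \<le> 1" using x by auto
  ultimately show "z \<in> ball 0 (1+e)" using x by simp
qed

lemma Nb_mono: "d \<le> e \<Longrightarrow> Nb d \<subseteq> Nb e"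
  unfolding Nb_def by auto

lemma open_Nb: "open (Nb e)"
  unfolding Nb_def by auto

lemma ball_sub_slit: "0 < \<beta> \<Longrightarrow> ball 0 (1+\<beta>) \<subseteq> slit_plane \<beta>"
proof
  fix z :: complex assume "0 < \<beta>" "z \<in> ball 0 (1+\<beta>)"
  then have "cmod z < 1 + \<beta>" by simp
  moreover have "\<bar>Re z\<bar> \<le> cmod z" by (rule abs_Re_le_cmod)
  ultimately show "z \<in> slit_plane \<beta>" unfolding slit_plane_def by auto
qed

lemma EXT:
  assumes b: "0 < \<beta>" "\<beta> < 1" and d: "0 < \<delta>" "\<delta> \<le> \<beta>/2"
  shows "\<exists>\<epsilon>>0. \<forall>\<phi>. epstein \<beta> \<phi> \<longrightarrow> (\<exists>G. G holomorphic_on Nb \<epsilon> \<and>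
           (\<forall>x\<in>I_int. G (complex_of_real x) = complex_of_real (\<phi> x)) \<and> G ` Nb \<epsilon> \<subseteq> Nb \<delta>)"
proof -
  obtain \<epsilon> where e: "\<epsilon> > 0" and key: "\<And>H w. H \<in> Fp \<beta> \<Longrightarrow> w \<in> Nb \<epsilon> \<Longrightarrow> \<exists>z\<in>Nb \<delta>. H z = w"
    using KEY[OF b d] unfolding Nb_iff by blast
  define S where "S = ball (0::complex) (1+\<beta>)"
  have "ball (0::complex) (1+\<delta>) \<subseteq> ball 0 (1+\<beta>)" using d b by (intro subset_ball) simp
  then have NS: "Nb \<delta> \<subseteq> S" using Nb_sub_ball[OF d(1)] unfolding S_def by blast
  show ?thesis
  proof (rule exI[of _ \<epsilon>], intro conjI allI impI)
    show "\<epsilon> > 0" by (rule e)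
    fix \<phi> assume ep: "epstein \<beta> \<phi>"
    then obtain H where H: "H holomorphic_on slit_plane \<beta>" "inj_on H (slit_plane \<beta>)"
      "\<And>y. y \<in> I_int \<Longrightarrow> H (complex_of_real y) = complex_of_real (inv_into I_int \<phi> y)"
      unfolding epstein_def by blast
    have bij: "bij_betw \<phi> I_int I_int" using ep by (simp add: epstein_def diffeo_I_def)
    have holH: "H holomorphic_on S" and injH: "inj_on H S"
      using H(1,2) ball_sub_slit[OF b(1)] unfolding S_def
      by (auto elim: holomorphic_on_subset inj_on_subset)
    define f where "f = inv_into I_int \<phi>"
    have bijf: "bij_betw f I_int I_int" unfolding f_def by (rule bij_betw_inv_into[OF bij])
    have IS: "complex_of_real t \<in> S" if "t \<in> I_int" for t using that b by (auto simp: S_def)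
    have fH: "f y = Re (H (complex_of_real y))" if "y \<in> I_int" for y using H(3)[OF that] by (simp add: f_def)
    have cf: "continuous_on I_int f"
    proof -
      have "continuous_on S H" using holH holomorphic_on_imp_continuous_on by blast
      then have "continuous_on (complex_of_real ` I_int) H"
        using IS by (auto intro: continuous_on_subset)
      moreover have "continuous_on I_int complex_of_real" by (intro continuous_intros)
      ultimately have "continuous_on I_int (H \<circ> complex_of_real)"
        using continuous_on_compose by blast
      then have "continuous_on I_int (\<lambda>t. Re ((H \<circ> complex_of_real) t))"
        by (rule continuous_on_Re)
      then show ?thesis using fH by (auto simp: comp_def intro: continuous_on_cong[THEN iffD1])
    qed
    have Hr: "H (complex_of_real y) = complex_of_real (f y)" if "y \<in> I_int" for y using H(3)[OF that] by (simp add: f_def)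
    have ends: "(f (-1) = -1 \<and> f 1 = 1) \<or> (f (-1) = 1 \<and> f 1 = -1)" by (rule endpoints[OF cf bijf])
    define \<sigma> where "\<sigma> = complex_of_real (f 1)"
    have s2: "\<sigma> * \<sigma> = 1" "\<sigma> \<noteq> 0" using ends by (auto simp: \<sigma>_def)
    have "H (-1) = complex_of_real (f (-1))" "H 1 = complex_of_real (f 1)"
      using Hr[of "-1"] Hr[of 1] by auto
    have sH: "(\<lambda>z. \<sigma> * H z) \<in> Fp \<beta>"
      unfolding Fp_def
    proof (intro CollectI conjI ballI)
      show "(\<lambda>z. \<sigma> * H z) holomorphic_on ball 0 (1 + \<beta>)" using holH by (auto simp: S_def intro!: holomorphic_intros)
      show "inj_on (\<lambda>z. \<sigma> * H z) (ball 0 (1 + \<beta>))" using injH s2 by (auto simp: S_def inj_on_def)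
      show "\<sigma> * H (- 1) = - 1" "\<sigma> * H 1 = 1"
        using Hr[of "-1"] Hr[of 1] ends by (auto simp: \<sigma>_def)
      fix x :: real assume x: "x \<in> I_int"
      have "f x \<in> I_int" using bijf x by (auto simp: bij_betw_def)
      then have fx: "f x \<in> I_int" "- f x \<in> I_int" by auto
      show "\<sigma> * H (complex_of_real x) \<in> complex_of_real ` I_int"
      proof (cases "f 1 = 1")
        case True
        then have "\<sigma> * H (complex_of_real x) = complex_of_real (f x)" using Hr[OF x] by (simp add: \<sigma>_def)
        then show ?thesis using fx by blast
      next
        case False
        then have "f 1 = -1" using ends by auto
        then have "\<sigma> * H (complex_of_real x) = complex_of_real (- f x)" using Hr[OF x] by (simp add: \<sigma>_def)
        then show ?thesis using fx by blast
      qed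
    qed
    have NH: "Nb \<epsilon> \<subseteq> H ` Nb \<delta>"
    proof
      fix w assume w: "w \<in> Nb \<epsilon>"
      have "\<sigma> * w \<in> Nb \<epsilon>" using w Nb_neg[OF w] ends by (auto simp: \<sigma>_def)
      then obtain z where z: "z \<in> Nb \<delta>" "\<sigma> * H z = \<sigma> * w" using key[OF sH] by blast
      then have "H z = w" using s2 by simp
      then show "w \<in> H ` Nb \<delta>" using z by blast
    qed
    obtain g where g: "g holomorphic_on (H ` S)" "\<And>z. z \<in> S \<Longrightarrow> g (H z) = z"
      using holomorphic_has_inverse[OF holH _ injH] unfolding S_def by (metis open_ball)
    show "\<exists>G. G holomorphic_on Nb \<epsilon> \<and> (\<forall>x\<in>I_int. G (complex_of_real x) = complex_of_real (\<phi> x)) \<and> G ` Nb \<epsilon> \<subseteq> Nb \<delta>"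
    proof (intro exI[of _ g] conjI ballI)
      show "g holomorphic_on Nb \<epsilon>"
        using g(1) NH NS by (meson holomorphic_on_subset image_mono subset_trans)
      fix x :: real assume x: "x \<in> I_int"
      have px: "\<phi> x \<in> I_int" using bij x by (auto simp: bij_betw_def)
      have "f (\<phi> x) = x" unfolding f_def using bij x by (simp add: bij_betw_def inv_into_f_f)
      then have "H (complex_of_real (\<phi> x)) = complex_of_real x" using Hr[OF px] by simp
      then show "g (complex_of_real x) = complex_of_real (\<phi> x)" using g(2)[OF IS[OF px]] by simp
    next
      show "g ` Nb \<epsilon> \<subseteq> Nb \<delta>"
      proof (rule subsetI)
        fix v assume "v \<in> g ` Nb \<epsilon>"
        then obtain w where w: "w \<in> Nb \<epsilon>" "v = g w" by blast
        then obtain z where "z \<in> Nb \<delta>" "w = H z" using NH by blast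
        then show "v \<in> Nb \<delta>" using g(2) NS w by (metis subsetD)
      qed
    qed
  qed
qed



lemma poly_of_real_c: "poly (map_poly complex_of_real q) (complex_of_real x) = complex_of_real (poly q x)"
  by (induction q) (auto simp: map_poly_pCons)

lemma POLY:
  fixes q :: "real poly"
  assumes q: "poly q ` I_int \<subseteq> I_int" and e: "0 < e"
  shows "\<exists>\<eta>>0. \<forall>z\<in>Nb \<eta>. poly (map_poly complex_of_real q) z \<in> Nb e"
proof -
  define pc where "pc = poly (map_poly complex_of_real q)"
  have "uniformly_continuous_on (cball 0 2) pc"
    unfolding pc_def by (intro compact_uniformly_continuous) (auto intro!: continuous_intros)
  then obtain d where d: "d > 0" "\<And>x y. x \<in> cball 0 2 \<Longrightarrow> y \<in> cball 0 2 \<Longrightarrow> dist y x < d \<Longrightarrow> dist (pc y) (pc x) < e"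
    unfolding uniformly_continuous_on_def using e by metis
  show ?thesis
  proof (rule exI[of _ "min d 1"], intro conjI ballI)
    show "0 < min d 1" using d by simp
    fix z assume "z \<in> Nb (min d 1)"
    then obtain x where x: "x \<in> I_int" "cmod (z - complex_of_real x) < min d 1" by (auto simp: Nb_iff)
    have xb: "complex_of_real x \<in> cball 0 2" using x by auto
    have "cmod z \<le> cmod (complex_of_real x) + cmod (z - complex_of_real x)"
      by (metis add.commute diff_add_cancel norm_triangle_ineq)
    then have zb: "z \<in> cball 0 2" using x by auto
    have "dist (pc z) (pc (complex_of_real x)) < e" using d(2)[OF xb zb] x by (simp add: dist_norm)
    moreover have "pc (complex_of_real x) = complex_of_real (poly q x)" by (simp add: pc_def poly_of_real_c)
    moreover have "poly q x \<in> I_int" using subsetD[OF q imageI[OF x(1)]] .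
    ultimately show "poly (map_poly complex_of_real q) z \<in> Nb e"
      unfolding pc_def Nb_iff by (auto simp: dist_norm)
  qed
qed

lemma chain_I:
  assumes "\<forall>i\<in>{1..j}. \<phi> i ` I_int \<subseteq> I_int" "\<forall>i\<in>{1..j}. poly (p i) ` I_int \<subseteq> I_int" "x \<in> I_int"
  shows "chain_map \<phi> p j x \<in> I_int"
  using assms
proof (induction j)
  case 0
  then show ?case by simp
next
  case (Suc j)
  then have c: "chain_map \<phi> p j x \<in> I_int" by auto
  have A: "\<phi> (Suc j) ` I_int \<subseteq> I_int" "poly (p (Suc j)) ` I_int \<subseteq> I_int" using Suc.prems by auto
  have "poly (p (Suc j)) (chain_map \<phi> p j x) \<in> I_int" using subsetD[OF A(2) imageI[OF c]] .
  then have "\<phi> (Suc j) (poly (p (Suc j)) (chain_map \<phi> p j x)) \<in> I_int" using subsetD[OF A(1) imageI] by blast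
  then show ?case by simp
qed

lemma epstein_I: "epstein \<beta> \<phi> \<Longrightarrow> \<phi> ` I_int \<subseteq> I_int"
  by (auto simp: epstein_def diffeo_I_def bij_betw_def)

lemma unimodal_I: "unimodal_poly_I q \<Longrightarrow> poly q ` I_int \<subseteq> I_int"
  by (simp add: unimodal_poly_I_def)

lemma CHAIN:
  assumes b: "0 < \<beta>" "\<beta> < 1" and P: "\<forall>i\<in>{1..b}. unimodal_poly_I (p i)"
  shows "j \<le> b \<Longrightarrow> 0 < \<delta> \<Longrightarrow> \<delta> \<le> \<beta>/2 \<Longrightarrow> \<exists>\<eta>>0. \<forall>\<phi>. (\<forall>i\<in>{1..j}. epstein \<beta> (\<phi> i)) \<longrightarrow>
     (\<exists>G. G holomorphic_on Nb \<eta> \<and> (\<forall>x\<in>I_int. G (complex_of_real x) = complex_of_real (chain_map \<phi> p j x))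
        \<and> G ` Nb \<eta> \<subseteq> Nb \<delta>)"
proof (induction j arbitrary: \<delta>)
  case 0
  show ?case
  proof (rule exI[of _ \<delta>], intro conjI allI impI)
    show "0 < \<delta>" by (rule 0)
    fix \<phi> :: "nat \<Rightarrow> real \<Rightarrow> real"
    show "\<exists>G. G holomorphic_on Nb \<delta> \<and> (\<forall>x\<in>I_int. G (complex_of_real x) = complex_of_real (chain_map \<phi> p 0 x)) \<and> G ` Nb \<delta> \<subseteq> Nb \<delta>"
      by (rule exI[of _ "\<lambda>z. z"]) auto
  qed
next
  case (Suc j)
  obtain \<epsilon> where e: "\<epsilon> > 0" and ext: "\<And>\<phi>. epstein \<beta> \<phi> \<Longrightarrow> \<exists>G. G holomorphic_on Nb \<epsilon> \<and>
           (\<forall>x\<in>I_int. G (complex_of_real x) = complex_of_real (\<phi> x)) \<and> G ` Nb \<epsilon> \<subseteq> Nb \<delta>"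
    using EXT[OF b Suc.prems(2,3)] by blast
  define q where "q = p (Suc j)"
  have qI: "poly q ` I_int \<subseteq> I_int" using P Suc.prems(1) unimodal_I by (auto simp: q_def)
  obtain \<eta>' where e': "\<eta>' > 0" and pq: "\<And>z. z \<in> Nb \<eta>' \<Longrightarrow> poly (map_poly complex_of_real q) z \<in> Nb \<epsilon>"
    using POLY[OF qI e] by blast
  have "\<exists>\<eta>>0. \<forall>\<phi>. (\<forall>i\<in>{1..j}. epstein \<beta> (\<phi> i)) \<longrightarrow>
     (\<exists>G. G holomorphic_on Nb \<eta> \<and> (\<forall>x\<in>I_int. G (complex_of_real x) = complex_of_real (chain_map \<phi> p j x))
        \<and> G ` Nb \<eta> \<subseteq> Nb (min \<eta>' (\<beta>/2)))"
    by (rule Suc.IH) (use Suc.prems e' b in auto)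
  then obtain \<eta> where eta: "\<eta> > 0" and ih: "\<And>\<phi>. (\<forall>i\<in>{1..j}. epstein \<beta> (\<phi> i)) \<Longrightarrow>
     (\<exists>G. G holomorphic_on Nb \<eta> \<and> (\<forall>x\<in>I_int. G (complex_of_real x) = complex_of_real (chain_map \<phi> p j x))
        \<and> G ` Nb \<eta> \<subseteq> Nb (min \<eta>' (\<beta>/2)))"
    by blast
  show ?case
  proof (rule exI[of _ \<eta>], intro conjI allI impI)
    show "0 < \<eta>" by (rule eta)
    fix \<phi> :: "nat \<Rightarrow> real \<Rightarrow> real"
    assume ep: "\<forall>i\<in>{1..Suc j}. epstein \<beta> (\<phi> i)"
    obtain G0 where G0: "G0 holomorphic_on Nb \<eta>" "\<And>x. x \<in> I_int \<Longrightarrow> G0 (complex_of_real x) = complex_of_real (chain_map \<phi> p j x)"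
       "G0 ` Nb \<eta> \<subseteq> Nb (min \<eta>' (\<beta>/2))"
      using ih[of \<phi>] ep by auto
    obtain G1 where G1: "G1 holomorphic_on Nb \<epsilon>" "\<And>x. x \<in> I_int \<Longrightarrow> G1 (complex_of_real x) = complex_of_real (\<phi> (Suc j) x)"
       "G1 ` Nb \<epsilon> \<subseteq> Nb \<delta>"
      using ext[of "\<phi> (Suc j)"] ep by auto
    define pc where "pc = poly (map_poly complex_of_real q)"
    have s1: "G0 ` Nb \<eta> \<subseteq> Nb \<eta>'" using G0(3) Nb_mono[of "min \<eta>' (\<beta>/2)" \<eta>'] by auto
    have s2: "(pc \<circ> G0) ` Nb \<eta> \<subseteq> Nb \<epsilon>" using s1 pq by (auto simp: pc_def)
    have h1: "(pc \<circ> G0) holomorphic_on Nb \<eta>"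
      unfolding pc_def comp_def using G0(1) by (intro holomorphic_intros)
    have h2: "(G1 \<circ> (pc \<circ> G0)) holomorphic_on Nb \<eta>"
      by (rule holomorphic_on_compose_gen[OF h1 G1(1) s2])
    show "\<exists>G. G holomorphic_on Nb \<eta> \<and> (\<forall>x\<in>I_int. G (complex_of_real x) = complex_of_real (chain_map \<phi> p (Suc j) x)) \<and> G ` Nb \<eta> \<subseteq> Nb \<delta>"
    proof (rule exI[of _ "G1 \<circ> (pc \<circ> G0)"], intro conjI ballI)
      show "(G1 \<circ> (pc \<circ> G0)) holomorphic_on Nb \<eta>" by (rule h2)
      show "(G1 \<circ> (pc \<circ> G0)) ` Nb \<eta> \<subseteq> Nb \<delta>" using s2 G1(3) by (metis image_comp image_mono subset_trans)
      fix x :: real assume x: "x \<in> I_int"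
      have A1: "\<forall>i\<in>{1..j}. \<phi> i ` I_int \<subseteq> I_int"
      proof
        fix i assume "i \<in> {1..j}"
        then have "epstein \<beta> (\<phi> i)" using ep by auto
        then show "\<phi> i ` I_int \<subseteq> I_int" by (rule epstein_I)
      qed
      have A2: "\<forall>i\<in>{1..j}. poly (p i) ` I_int \<subseteq> I_int" using P Suc.prems(1) unimodal_I by auto
      have cI: "chain_map \<phi> p j x \<in> I_int" by (rule chain_I[OF A1 A2 x])
      have "poly q (chain_map \<phi> p j x) \<in> I_int" using subsetD[OF qI imageI[OF cI]] .
      then show "(G1 \<circ> (pc \<circ> G0)) (complex_of_real x) = complex_of_real (chain_map \<phi> p (Suc j) x)"
        using G0(2)[OF x] G1(2) by (simp add: pc_def poly_of_real_c q_def)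
    qed
  qed
qed



lemma ellipse:
  assumes "0 < \<eta>"
  shows "\<exists>U. jordan_domain U \<and> complex_of_real ` I_int \<subseteq> U \<and> U \<subseteq> Nb \<eta>"
proof -
  define a where "a = 1 + \<eta>/3"
  define c where "c = \<eta>/3"
  have ac: "a > 1" "c > 0" using assms by (auto simp: a_def c_def)
  define L where "L z = Complex (a * Re z) (c * Im z)" for z
  have lin: "linear L"
    by (rule linearI) (auto simp: L_def complex_eq_iff algebra_simps)
  have inj: "inj L"
    using ac by (auto simp: inj_on_def L_def complex_eq_iff)
  define E where "E = L ` cball 0 1"
  have cE: "convex E" unfolding E_def by (rule convex_linear_image[OF lin]) simp
  have bE: "bounded E" unfolding E_def
    by (rule bounded_linear_image) (auto intro: linear_conv_bounded_linear[THEN iffD1, OF lin])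
  have clE: "closure E = L ` cball 0 1"
    unfolding E_def using closure_injective_linear_image[OF lin inj, of "cball 0 1"] by simp
  have inE: "interior E = L ` ball 0 1"
    unfolding E_def using interior_injective_linear_image[OF lin inj, of "cball 0 1"] by simp
  have frE: "frontier E = L ` sphere 0 1"
    unfolding frontier_def clE inE
    using inj by (auto simp: inj_on_def image_set_diff[symmetric] cball_diff_eq_sphere[symmetric] )
  define \<gamma> where "\<gamma> = L \<circ> circlepath 0 1"
  have sp: "simple_path \<gamma>" unfolding \<gamma>_def
    using simple_path_linear_image_eq[OF lin inj] simple_path_circlepath by auto
  have cl: "pathfinish \<gamma> = pathstart \<gamma>" unfolding \<gamma>_def
    by (simp add: pathfinish_compose pathstart_compose)
  have pi: "path_image \<gamma> = frontier E" unfolding \<gamma>_def frE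
    by (simp add: path_image_compose)
  have ins: "inside (path_image \<gamma>) = L ` ball 0 1"
    using inside_frontier_eq_interior[OF bE cE] pi inE by simp
  show ?thesis
  proof (intro exI conjI)
    show "jordan_domain (L ` ball 0 1)" unfolding jordan_domain_def using sp cl ins by metis
    show "complex_of_real ` I_int \<subseteq> L ` ball 0 1"
    proof
      fix w assume "w \<in> complex_of_real ` I_int"
      then obtain x where x: "x \<in> I_int" "w = complex_of_real x" by auto
      have "\<bar>x / a\<bar> < 1" using x ac by (auto simp: abs_less_iff field_simps)
      then have "complex_of_real (x/a) \<in> ball 0 1" by (metis mem_ball_0 norm_of_real)
      moreover have "L (complex_of_real (x/a)) = w" using x ac by (simp add: L_def complex_eq_iff)
      ultimately show "w \<in> L ` ball 0 1" by blast
    qed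
    show "L ` ball 0 1 \<subseteq> Nb \<eta>"
    proof
      fix z assume "z \<in> L ` ball 0 1"
      then obtain v where v: "cmod v < 1" "z = L v" by auto
      have "\<bar>Re v\<bar> < 1" "\<bar>Im v\<bar> < 1"
        using v(1) abs_Re_le_cmod abs_Im_le_cmod by (metis le_less_trans)+
      then have r: "\<bar>Re z\<bar> < a" "\<bar>Im z\<bar> < c"
        using ac v(2) by (auto simp: L_def abs_mult)
      define x where "x = max (-1) (min 1 (Re z))"
      have xI: "x \<in> I_int" by (auto simp: x_def)
      have "\<bar>Re z - x\<bar> \<le> a - 1" using r(1) ac by (auto simp: x_def)
      then have "\<bar>Re (z - complex_of_real x)\<bar> + \<bar>Im (z - complex_of_real x)\<bar> < \<eta>"
        using r(2) assms by (simp add: a_def c_def; linarith)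
      then have "cmod (z - complex_of_real x) < \<eta>" using cmod_le le_less_trans by blast
      then show "z \<in> Nb \<eta>" using xI by (auto simp: Nb_iff)
    qed
  qed
qed

theorem lemma5p13:
  fixes b :: nat and p :: "nat \<Rightarrow> real poly" and \<beta> :: real
  assumes "\<forall>i\<in>{1..b}. unimodal_poly_I (p i)"
    and "0 < \<beta>" and "\<beta> < 1"
  shows "\<exists>U M. jordan_domain U \<and> complex_of_real ` I_int \<subseteq> U \<and> M > 0 \<and>
           (\<forall>g\<in>epstein_hat \<beta> b p. \<exists>G. G holomorphic_on U \<and>
               (\<forall>x\<in>I_int. G (complex_of_real x) = complex_of_real (g x)) \<and>
               (\<forall>z\<in>U. cmod (G z) \<le> M))"
proof -
  define Q where "Q j \<eta> \<longleftrightarrow> (\<forall>\<phi>. (\<forall>i\<in>{1..j}. epstein \<beta> (\<phi> i)) \<longrightarrow>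
     (\<exists>G. G holomorphic_on Nb \<eta> \<and> (\<forall>x\<in>I_int. G (complex_of_real x) = complex_of_real (chain_map \<phi> p j x))
        \<and> G ` Nb \<eta> \<subseteq> Nb (\<beta>/2)))" for j \<eta>
  have "\<forall>j\<in>{..b}. \<exists>\<eta>. \<eta> > 0 \<and> Q j \<eta>"
  proof
    fix j assume "j \<in> {..b}"
    then have "\<exists>\<eta>>0. Q j \<eta>" unfolding Q_def
      using CHAIN[OF assms(2,3,1), of j "\<beta>/2"] assms(2) by auto
    then show "\<exists>\<eta>. \<eta> > 0 \<and> Q j \<eta>" by blast
  qed
  then obtain hf where hf: "\<And>j. j \<in> {..b} \<Longrightarrow> hf j > 0 \<and> Q j (hf j)" by metis
  define \<eta> where "\<eta> = Min (hf ` {..b})"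
  have eta: "\<eta> > 0" unfolding \<eta>_def using hf by (subst Min_gr_iff) auto
  have etale: "\<eta> \<le> hf j" if "j \<in> {..b}" for j unfolding \<eta>_def using that by (intro Min_le) auto
  obtain U where U: "jordan_domain U" "complex_of_real ` I_int \<subseteq> U" "U \<subseteq> Nb \<eta>"
    using ellipse[OF eta] by blast
  show ?thesis
  proof (intro exI[of _ U] exI[of _ 2] conjI ballI)
    show "jordan_domain U" "complex_of_real ` I_int \<subseteq> U" using U by auto
    show "(2::real) > 0" by simp
    fix g assume "g \<in> epstein_hat \<beta> b p"
    then obtain j \<phi> where j: "j \<le> b" "\<forall>i\<in>{1..j}. epstein \<beta> (\<phi> i)" "\<forall>x\<in>I_int. g x = chain_map \<phi> p j x"
      unfolding epstein_hat_def by blast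
    then have "Q j (hf j)" using hf by auto
    then obtain G where G: "G holomorphic_on Nb (hf j)"
      "\<forall>x\<in>I_int. G (complex_of_real x) = complex_of_real (chain_map \<phi> p j x)" "G ` Nb (hf j) \<subseteq> Nb (\<beta>/2)"
      unfolding Q_def using j(2) by blast
    have UN: "U \<subseteq> Nb (hf j)" using U(3) Nb_mono[OF etale[of j]] j(1) by auto
    show "\<exists>G. G holomorphic_on U \<and> (\<forall>x\<in>I_int. G (complex_of_real x) = complex_of_real (g x)) \<and> (\<forall>z\<in>U. cmod (G z) \<le> 2)"
    proof (intro exI[of _ G] conjI ballI)
      show "G holomorphic_on U" using holomorphic_on_subset[OF G(1) UN] .
      show "G (complex_of_real x) = complex_of_real (g x)" if "x \<in> I_int" for x using G(2) j(3) that by simp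
      fix z assume "z \<in> U"
      then have "G z \<in> Nb (\<beta>/2)" using UN G(3) by auto
      then have "G z \<in> ball 0 (1 + \<beta>/2)" using Nb_sub_ball[of "\<beta>/2"] assms(2) by auto
      then show "cmod (G z) \<le> 2" using assms(3) by simp
    qed
  qed
qed

end
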